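(* For $\tau$ in the upper half-plane: (a) $x=\mathfrak{b}(\tau)$ and $y=\mathfrak{b}(2\tau)$ satisfy $x^2y^2+4y^2-16x=0$; (b) $(\mathfrak{b}(\tau)+2)^4\,\mathfrak{b}^4(4\tau)=2^8\left(\mathfrak{b}^3(\tau)+4\mathfrak{b}(\tau)\right)$.
   Context: $q=e^{2\pi i\tau}$, $q^r:=e^{2\pi i r\tau}$, and $\mathfrak{b}(\tau)=2\prod_{n\ge1}\left(\frac{1-q^{n/2-1/4}}{1+q^{n/2-1/4}}\right)^2$ (equivalently $2\mathfrak{f}_1(\tau/2)^2/\mathfrak{f}(\tau/2)^2$ with Weber–Schläfli functions $\mathfrak{f},\mathfrak{f}_1$). *)

theory Defs
  imports "HOL-Complex_Analysis.Complex_Analysis"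
begin

definition qpow :: "complex \<Rightarrow> real \<Rightarrow> complex" where
  "qpow \<tau> r = exp (2 * of_real pi * \<i> * of_real r * \<tau>)"

text \<open>b(tau) = 2 * prod_{n>=1} ((1 - q^(n/2-1/4)) / (1 + q^(n/2-1/4)))^2.
  The product index n runs over n \<ge> 1; we shift to m = n - 1 \<ge> 0.\<close>
definition bfun :: "complex \<Rightarrow> complex" where
  "bfun \<tau> = 2 * (\<Prod>m. ((1 - qpow \<tau> (real (Suc m) / 2 - 1 / 4)) /
                          (1 + qpow \<tau> (real (Suc m) / 2 - 1 / 4))) ^ 2)"

end

theory Submission
  imports Defs
begin

lemma pw: "(x::'a::comm_monoid_mult)^(2*n+1) = x * (x^2)^n"
  by (simp add: power_add power_mult[symmetric] mult.commute)
lemma pw2: "((q::'a::comm_monoid_mult)^2*w)*q^(2*n+1) = w * q^(2*Suc n+1)"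
proof -
  have "2*Suc n+1 = 2 + (2*n+1)" by simp
  then show ?thesis by (simp only: power_add mult_ac)
qed
lemma sq_less1: "norm (q::complex) < 1 \<Longrightarrow> norm (norm q ^ 2) < 1"
  by (simp add: power_less_one_iff abs_square_less_1)
lemma geo_summ: "norm (q::complex) < 1 \<Longrightarrow> summable (\<lambda>n. c * norm q * (norm q ^ 2) ^ n)"
  by (intro summable_mult summable_geometric sq_less1)
lemma norm_term: "norm (w * (q::complex) ^ (2*n+1)) = norm w * norm q * (norm q ^ 2) ^ n"
  unfolding norm_mult norm_power pw by (simp add: mult_ac)

definition P1 :: "complex \<Rightarrow> complex \<Rightarrow> complex" where
  "P1 q w = (\<Prod>n. 1 + w * q ^ (2*n+1))"

lemma P1_summable:
  fixes q w :: complex assumes "norm q < 1"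
  shows "summable (\<lambda>n. norm ((1 + w * q ^ (2*n+1)) - 1))"
proof -
  have "summable (\<lambda>n. norm w * norm q * (norm q ^ 2) ^ n)"
    using assms by (rule geo_summ)
  then show ?thesis by (simp only: add_diff_cancel_left' norm_term)
qed

lemma P1_conv:
  fixes q w :: complex assumes "norm q < 1"
  shows "convergent_prod (\<lambda>n. 1 + w * q ^ (2*n+1))"
  by (intro abs_convergent_prod_imp_convergent_prod summable_imp_abs_convergent_prod P1_summable assms)

lemma P1_shift:
  fixes q w :: complex assumes "norm q < 1"
  shows "P1 q w = (1 + q * w) * P1 q (q^2 * w)"
proof -
  have "(\<lambda>n. 1 + (q^2*w) * q ^ (2*n+1)) has_prod P1 q (q^2*w)"
    unfolding P1_def using P1_conv[OF assms] convergent_prod_has_prod by blast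
  moreover have "(\<lambda>n. 1 + (q^2*w) * q ^ (2*n+1)) = (\<lambda>n. 1 + w * q ^ (2*(Suc n)+1))"
    by (simp only: pw2)
  ultimately have "(\<lambda>n. 1 + w * q ^ (2*n+1)) has_prod (P1 q (q^2*w) * (1 + w * q))"
    using has_prod_Suc_imp[of "\<lambda>n. 1 + w * q ^ (2*n+1)"] by simp
  then show ?thesis unfolding P1_def[of q w] by (metis has_prod_unique mult.commute)
qed

lemma P1_nonzero:
  fixes q w :: complex assumes "norm q < 1" "norm w * norm q < 1"
  shows "P1 q w \<noteq> 0"
  unfolding P1_def
proof (rule prodinf_nonzero[OF P1_conv[OF assms(1)]])
  fix n
  have "norm (w * q ^ (2*n+1)) = norm w * norm q * norm q ^ (2*n)"
    by (simp add: norm_mult norm_power power_add)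
  also have "\<dots> \<le> norm w * norm q * 1"
    by (intro mult_left_mono power_le_one) (use assms in auto)
  finally have "norm (w * q ^ (2*n+1)) < 1" using assms by simp
  then show "1 + w * q ^ (2*n+1) \<noteq> 0"
    by (metis add.inverse_unique norm_minus_cancel norm_one order_less_irrefl)
qed

lemma P1_holo:
  fixes q :: complex assumes q: "norm q < 1"
  shows "P1 q holomorphic_on A"
proof (rule holomorphic_on_subset)
  define P where "P = (\<lambda>N w. \<Prod>n<N. 1 + w * q ^ (2*n+1))"
  have ul: "uniform_limit (cball 0 R) P (P1 q) sequentially" if R: "R > 0" for R
  proof -
    have "uniformly_convergent_on (cball 0 R) P"
      unfolding P_def
    proof (rule uniformly_convergent_on_prod')
      show "uniformly_convergent_on (cball 0 R) (\<lambda>N w. \<Sum>n<N. norm (1 + w * q ^ (2*n+1) - 1))"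
      proof (rule Weierstrass_m_test')
        show "summable (\<lambda>n. R * norm q * (norm q ^ 2) ^ n)"
          using q by (rule geo_summ)
        fix n w assume "w \<in> cball (0::complex) R"
        then have "norm w \<le> R" by simp
        then show "norm (norm (1 + w * q ^ (2*n+1) - 1)) \<le> R * norm q * (norm q ^ 2) ^ n"
        proof -
          have "norm w * norm q * (norm q^2)^n \<le> R * norm q * (norm q^2)^n"
            by (intro mult_right_mono) (use \<open>norm w \<le> R\<close> in auto)
          then show ?thesis by (simp only: add_diff_cancel_left' norm_term) simp
        qed
      qed
    qed (auto intro!: continuous_intros)
    then obtain g where g: "uniform_limit (cball 0 R) P g sequentially"
      by (auto simp: uniformly_convergent_on_def)
    also have "?this \<longleftrightarrow> uniform_limit (cball 0 R) P (P1 q) sequentially"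
    proof (intro uniform_limit_cong)
      fix z :: complex assume "z \<in> cball 0 R"
      with g have "(\<lambda>n. P (Suc n) z) \<longlonglongrightarrow> g z"
        by (metis tendsto_uniform_limitI filterlim_sequentially_Suc)
      moreover have "(\<lambda>n. P (Suc n) z) \<longlonglongrightarrow> P1 q z"
        using convergent_prod_LIMSEQ[OF P1_conv[OF q, of z]] unfolding P_def lessThan_Suc_atMost
        by (simp add: P1_def)
      ultimately show "g z = P1 q z"
        using tendsto_unique by force
    qed auto
    finally show ?thesis .
  qed
  show "P1 q holomorphic_on UNIV"
  proof (rule holomorphic_uniform_sequence)
    fix z :: complex
    have *: "uniform_limit (cball 0 (norm z + 1)) P (P1 q) sequentially"
      by (rule ul) (auto intro: add_nonneg_pos)
    hence "uniform_limit (cball z 1) P (P1 q) sequentially"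
      by (rule uniform_limit_on_subset) (simp add: cball_subset_cball_iff)
    thus "\<exists>d>0. cball z d \<subseteq> UNIV \<and> uniform_limit (cball z d) P (P1 q) sequentially"
      by (intro exI[of _ 1]) auto
  qed (auto intro!: holomorphic_intros simp: P_def)
qed auto



definition F :: "complex \<Rightarrow> complex \<Rightarrow> complex" where
  "F q w = P1 q w * P1 q (inverse w)"

lemma P1_holo':
  assumes q: "norm q < 1" and g: "g holomorphic_on A"
  shows "(\<lambda>z. P1 q (g z)) holomorphic_on A"
  using holomorphic_on_compose[OF g P1_holo[OF q]] by (simp add: o_def)

context
  fixes q :: complex
  assumes q: "norm q < 1" "q \<noteq> 0"
begin

lemma F_sym: "F q (inverse w) = F q w"
  unfolding F_def by simp

lemma F_func:
  assumes w: "w \<noteq> 0"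
  shows "q * w * F q (q^2 * w) = F q w"
proof -
  have "P1 q (inverse (q^2*w)) = (1 + q * inverse (q^2*w)) * P1 q (q^2 * inverse (q^2*w))"
    by (rule P1_shift[OF q(1)])
  also have "q^2 * inverse (q^2*w) = inverse w" using q(2) w by (simp add: field_simps power2_eq_square)
  finally have 1: "P1 q (inverse (q^2*w)) = (1 + q * inverse (q^2*w)) * P1 q (inverse w)" .
  have 2: "P1 q w = (1 + q * w) * P1 q (q^2 * w)" by (rule P1_shift[OF q(1)])
  have "q * w * F q (q^2 * w) = q * w * (1 + q * inverse (q^2*w)) * P1 q (q^2 * w) * P1 q (inverse w)"
    unfolding F_def 1 by (simp add: mult_ac)
  also have "q * w * (1 + q * inverse (q^2*w)) = 1 + q * w"
    using q(2) w by (simp add: field_simps power2_eq_square)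
  finally show ?thesis unfolding F_def 2 by (simp add: mult_ac)
qed

definition "NN z = F q z ^ 2 + F q (- z) ^ 2"
definition "DD z = F q (\<i> * z) * F q (- \<i> * z)"
definition "D1 z = P1 q (\<i> * z) * P1 q (- \<i> * z) * P1 q (q^2 * inverse (\<i> * z)) * P1 q (- (q^2 * inverse (\<i> * z)))"

lemma NN_func: assumes "z \<noteq> 0" shows "q^2 * z^2 * NN (q^2 * z) = NN z"
proof -
  have a: "q * z * F q (q^2 * z) = F q z" using F_func assms by blast
  have b: "q * (-z) * F q (q^2 * (-z)) = F q (-z)" by (rule F_func) (use assms in simp)
  have "NN z = (q * z * F q (q^2 * z))^2 + (q * (-z) * F q (q^2 * (-z)))^2"
    unfolding NN_def a b ..
  then show ?thesis unfolding NN_def by (simp add: power_mult_distrib algebra_simps)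
qed

lemma DD_func: assumes "z \<noteq> 0" shows "q^2 * z^2 * DD (q^2 * z) = DD z"
proof -
  have a: "q * (\<i>*z) * F q (q^2 * (\<i>*z)) = F q (\<i>*z)" by (rule F_func) (use assms in simp)
  have b: "q * (-\<i>*z) * F q (q^2 * (-\<i>*z)) = F q (-\<i>*z)" by (rule F_func) (use assms in simp)
  have "DD z = (q * (\<i>*z) * F q (q^2 * (\<i>*z))) * (q * (-\<i>*z) * F q (q^2 * (-\<i>*z)))"
    unfolding DD_def a b ..
  then show ?thesis unfolding DD_def by (simp add: power2_eq_square algebra_simps)
qed

lemma DD_D1: assumes "z \<noteq> 0" shows "z^2 * DD z = (z^2 + q^2) * D1 z"
proof -
  have a: "P1 q (inverse (\<i>*z)) = (1 + q * inverse (\<i>*z)) * P1 q (q^2 * inverse (\<i>*z))"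
    by (rule P1_shift[OF q(1)])
  have b: "P1 q (inverse (-\<i>*z)) = (1 + q * inverse (-\<i>*z)) * P1 q (q^2 * inverse (-\<i>*z))"
    by (rule P1_shift[OF q(1)])
  have c: "q^2 * inverse (-\<i>*z) = - (q^2 * inverse (\<i>*z))" by simp
  have "z^2 * DD z = z^2 * (1 + q * inverse (\<i>*z)) * (1 + q * inverse (-\<i>*z)) * D1 z"
    unfolding DD_def D1_def F_def a b c by (simp add: mult_ac)
  also have "z^2 * (1 + q * inverse (\<i>*z)) * (1 + q * inverse (-\<i>*z)) = z^2 + q^2"
    using assms by (simp add: field_simps power2_eq_square)
  finally show ?thesis .
qed

lemma NN_iq: "NN (\<i> * q) = 0" "NN (- \<i> * q) = 0"
proof -
  have "F q (- (\<i>*q)) = F q (inverse (- (\<i>*q)))" by (rule F_sym[symmetric])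
  also have "inverse (- (\<i>*q)) = \<i> * inverse q" using q by (simp add: field_simps)
  also have "F q (\<i> * inverse q) = q * (\<i> * inverse q) * F q (q^2 * (\<i> * inverse q))"
    using F_func q by simp
  also have "q^2 * (\<i> * inverse q) = \<i> * q" using q by (simp add: field_simps power2_eq_square)
  also have "q * (\<i> * inverse q) = \<i>" using q by simp
  finally have e: "F q (- (\<i>*q)) = \<i> * F q (\<i> * q)" .
  show "NN (\<i> * q) = 0" unfolding NN_def e by (simp add: power_mult_distrib)
  show "NN (- \<i> * q) = 0" unfolding NN_def using e by (simp add: power_mult_distrib)
qed

end


lemma open_annulus: "open {z::complex. a < norm z \<and> norm z < b}"
  by (intro open_Collect_conj open_Collect_less continuous_intros)

lemma key_identity:
  fixes q :: complex
  assumes q: "norm q < 1" "q \<noteq> 0"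
  shows "NN q 1 * DD q \<i> = NN q \<i> * DD q 1"
proof -
  define r where "r = norm q"
  have r: "0 < r" "r < 1" using q by (auto simp: r_def)
  have r3: "r^3 < r^2" "r^2 < r" "r < 1" "1 < 1/r"
    using r by (auto simp: power_strict_decreasing power2_eq_square power3_eq_cube)
  define U where "U = {z::complex. r^3 < norm z \<and> norm z < 1/r}"
  have Uopen: "open U" unfolding U_def by (rule open_annulus)
  have Uconn: "connected U"
    using connected_annulus(1)[of "r^3" "0::complex" "1/r"] by (simp add: U_def)
  have U0: "z \<noteq> 0" if "z \<in> U" for z using that r by (auto simp: U_def)
  have iqU: "\<i> * q \<in> U" "- \<i> * q \<in> U" using r3 by (auto simp: U_def norm_mult r_def)
  have D1nz: "D1 q z \<noteq> 0" if "z \<in> U" for z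
  proof -
    have z: "r^3 < norm z" "norm z < 1/r" using that by (auto simp: U_def)
    have nz: "norm z * r < 1" using z(2) r by (simp add: field_simps)
    have zz: "norm z > 0" using z(1) r by (smt (verit) zero_less_power)
    have "norm (q^2 * inverse (\<i> * z)) * norm q = r^3 / norm z"
      by (simp add: norm_mult norm_power norm_divide norm_inverse r_def field_simps power3_eq_cube power2_eq_square)
    also have "\<dots> < 1" using z(1) zz by simp
    finally have n3: "norm (q^2 * inverse (\<i> * z)) * norm q < 1" .
    show ?thesis unfolding D1_def[OF q]
      using P1_nonzero[OF q(1)] nz n3 by (simp add: norm_mult r_def)
  qed
  define H where "H = (\<lambda>z. NN q z * z^2 / D1 q z)"
  have Hh: "H holomorphic_on U"
    unfolding H_def NN_def[OF q] F_def using D1nz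
    unfolding D1_def[OF q] using U0
    by (intro holomorphic_intros P1_holo'[OF q(1)]) (auto simp: D1_def[OF q])
  have H0: "H (\<i> * q) = 0" "H (- \<i> * q) = 0"
    unfolding H_def using NN_iq[OF q] by auto
  define H1 where "H1 = (\<lambda>z. if z = \<i> * q then deriv H (\<i> * q) else (H z - H (\<i> * q)) / (z - \<i> * q))"
  have H1h: "H1 holomorphic_on U"
    unfolding H1_def by (rule pole_lemma[OF Hh]) (simp add: interior_open[OF Uopen] iqU)
  define G where "G = (\<lambda>z. if z = - \<i> * q then deriv H1 (- \<i> * q) else (H1 z - H1 (- \<i> * q)) / (z - (- \<i> * q)))"
  have Gh: "G holomorphic_on U"
    unfolding G_def by (rule pole_lemma[OF H1h]) (use iqU(2) in \<open>simp add: interior_open[OF Uopen]\<close>)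
  have neq: "- \<i> * q \<noteq> \<i> * q" using q(2) by simp
  have H1m: "H1 (- \<i> * q) = 0" unfolding H1_def using neq H0 by simp
  have GD: "G z * DD q z = NN q z" "DD q z \<noteq> 0"
    if z: "z \<in> U" "z \<noteq> \<i> * q" "z \<noteq> - \<i> * q" for z
  proof -
    have z0: "z \<noteq> 0" using U0 z(1) .
    have fac: "z^2 + q^2 = (z - \<i> * q) * (z - (- \<i> * q))"
      by (simp add: algebra_simps power2_eq_square)
    have fnz: "z^2 + q^2 \<noteq> 0" unfolding fac using z by (simp add: add_eq_0_iff2)
    have Gz: "G z = NN q z * z^2 / ((z^2 + q^2) * D1 q z)"
    proof -
      have "G z = H1 z / (z - (- \<i> * q))" unfolding G_def using z(3) H1m by simp
      also have "H1 z = H z / (z - \<i> * q)" unfolding H1_def using z(2) H0 by simp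
      finally have "G z = H z / (z^2 + q^2)" unfolding fac by simp
      then show ?thesis unfolding H_def by simp
    qed
    have dd: "z^2 * DD q z = (z^2 + q^2) * D1 q z" by (rule DD_D1[OF q z0])
    show "DD q z \<noteq> 0" using dd fnz D1nz[OF z(1)] z0 by auto
    then show "G z * DD q z = NN q z"
      unfolding Gz dd[symmetric] using z0 by (simp add: field_simps)
  qed
  have Ginv: "G (q^2 * z) = G z"
    if z: "z \<in> U" "q^2 * z \<in> U" "norm z \<noteq> r" "norm (q^2 * z) \<noteq> r" for z
  proof -
    have nz: "z \<noteq> \<i> * q" "z \<noteq> - \<i> * q" "q^2 * z \<noteq> \<i> * q" "q^2 * z \<noteq> - \<i> * q"
    proof -
      have nr: "norm (\<i> * q) = r" "norm (- \<i> * q) = r" by (simp_all add: r_def norm_mult)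
      show "z \<noteq> \<i> * q" using z(3) nr(1) by metis
      show "z \<noteq> - \<i> * q" using z(3) nr(2) by metis
      show "q^2 * z \<noteq> \<i> * q" using z(4) nr(1) by metis
      show "q^2 * z \<noteq> - \<i> * q" using z(4) nr(2) by metis
    qed
    have z0: "z \<noteq> 0" using U0 z(1) .
    have a: "G (q^2 * z) * DD q (q^2 * z) = NN q (q^2 * z)" using GD(1)[OF z(2) nz(3,4)] .
    have "G (q^2 * z) * DD q z = NN q z"
      unfolding DD_func[OF q z0, symmetric] NN_func[OF q z0, symmetric] a[symmetric] by (simp add: mult_ac)
    then have "G (q^2 * z) * DD q z = G z * DD q z" using GD(1)[OF z(1) nz(1,2)] by simp
    then show ?thesis using GD(2)[OF z(1) nz(1,2)] by simp
  qed
  define K where "K = {z::complex. r^2 \<le> norm z \<and> norm z \<le> 1}"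
  have KU: "K \<subseteq> U" using r3 by (auto simp: K_def U_def)
  have Kc: "compact K"
  proof -
    have "bounded K" unfolding K_def by (rule boundedI[of _ 1]) auto
    moreover have "closed K" unfolding K_def
      by (intro closed_Collect_conj closed_Collect_le continuous_intros)
    ultimately show ?thesis by (simp add: compact_eq_bounded_closed)
  qed
  have "continuous_on K (\<lambda>z. norm (G z))"
    using holomorphic_on_imp_continuous_on[OF holomorphic_on_subset[OF Gh KU]]
    by (intro continuous_intros)
  moreover have "K \<noteq> {}" using r3 by (auto simp: K_def intro!: exI[of _ 1])
  ultimately obtain \<xi> where xi: "\<xi> \<in> K" "\<And>z. z \<in> K \<Longrightarrow> norm (G z) \<le> norm (G \<xi>)"
    using continuous_attains_sup[OF Kc] by metis
  have bound: "norm (G z) \<le> norm (G \<xi>)" if z: "z \<in> U" for z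
  proof -
    have zn: "r^3 < norm z" "norm z < 1/r" using z by (auto simp: U_def)
    consider "norm z < r^2" | "norm z > 1" | "z \<in> K" by (force simp: K_def)
    then show ?thesis
    proof cases
      case 1
      define w where "w = z / q^2"
      have zw: "z = q^2 * w" using q(2) by (simp add: w_def)
      have nw: "norm w = norm z / r^2" by (simp add: w_def norm_divide norm_power r_def)
      have "r^3 / r^2 < norm w" unfolding nw using zn r by (intro divide_strict_right_mono) auto
      then have w1: "r < norm w" using r by (simp add: power2_eq_square power3_eq_cube)
      have w2: "norm w < 1" unfolding nw using 1 r by simp
      have wK: "w \<in> K" using w1 w2 r3 by (auto simp: K_def)
      have "G z = G w" unfolding zw
        by (rule Ginv) (use wK KU z zw w1 1 r3 in auto)
      then show ?thesis using xi(2)[OF wK] by simp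
    next
      case 2
      define w where "w = q^2 * z"
      have nw: "norm w = r^2 * norm z" by (simp add: w_def norm_mult norm_power r_def)
      have w1: "r^2 < norm w" unfolding nw using 2 r by simp
      have "norm w < r^2 * (1/r)" unfolding nw using zn r by (intro mult_strict_left_mono) auto
      then have w2: "norm w < r" using r by (simp add: power2_eq_square)
      have wK: "w \<in> K" using w1 w2 r3 by (auto simp: K_def)
      have "G w = G z" unfolding w_def
        by (rule Ginv) (use wK KU z w_def w2 2 r3 in auto)
      then show ?thesis using xi(2)[OF wK] by simp
    qed (use xi in auto)
  qed
  have "G constant_on U"
    by (rule maximum_modulus_principle[OF Gh Uopen Uconn Uopen order_refl]) (use xi KU bound in auto)
  moreover have "1 \<in> U" "\<i> \<in> U" using r3 by (auto simp: U_def)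
  ultimately have G1i: "G 1 = G \<i>" by (metis constant_on_def)
  have n1: "(1::complex) \<noteq> \<i> * q" "(1::complex) \<noteq> - \<i> * q" "\<i> \<noteq> \<i> * q" "\<i> \<noteq> - \<i> * q"
    using q(1) by (auto dest: arg_cong[of _ _ norm] simp: norm_mult)
  have e1: "G 1 * DD q 1 = NN q 1" by (rule GD) (use \<open>1 \<in> U\<close> n1 in auto)
  have e2: "G \<i> * DD q \<i> = NN q \<i>" by (rule GD) (use \<open>\<i> \<in> U\<close> n1 in auto)
  show ?thesis unfolding e1[symmetric] e2[symmetric] G1i by (simp add: mult_ac)
qed



lemma P1_mult:
  assumes q: "norm q < 1" and "\<And>n. (1 + a * q^(2*n+1)) * (1 + b * q^(2*n+1)) = 1 + c * (q^2)^(2*n+1)"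
  shows "P1 q a * P1 q b = P1 (q^2) c"
  unfolding P1_def prodinf_mult[OF P1_conv[OF q] P1_conv[OF q]] assms(2) ..

lemma identity_AB:
  fixes q :: complex
  assumes q: "norm q < 1" "q \<noteq> 0"
  shows "(P1 q (-1))^2 * (P1 q 1)^2 * ((P1 q (-1))^4 + (P1 q 1)^4) = 2 * (P1 (q^2) 1)^4"
proof -
  have Fi: "F q \<i> = P1 (q^2) 1"
    unfolding F_def by (rule P1_mult[OF q(1)]) (simp add: algebra_simps power_mult[symmetric] power2_eq_square[symmetric] flip: power_add)
  have Fmi: "F q (-\<i>) = F q \<i>" unfolding F_def by (simp add: mult.commute)
  have F1: "F q 1 = (P1 q 1)^2" unfolding F_def by (simp add: power2_eq_square)
  have Fm1: "F q (-1) = (P1 q (-1))^2" unfolding F_def by (simp add: power2_eq_square)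
  have "NN q 1 * DD q \<i> = NN q \<i> * DD q 1" by (rule key_identity[OF q])
  then show ?thesis
    unfolding NN_def[OF q] DD_def[OF q] using Fi Fmi F1 Fm1
    by (simp add: power2_eq_square power4_eq_xxxx algebra_simps)
qed

definition bb :: "complex \<Rightarrow> complex" where
  "bb q = 2 * (P1 q (-1) / P1 q 1)^2"

lemma partA:
  fixes q :: complex
  assumes q: "norm q < 1" "q \<noteq> 0"
  defines "x \<equiv> bb q" and "y \<equiv> bb (q^2)"
  shows "x^2 * y^2 + 4 * y^2 - 16 * x = 0"
proof -
  define A where "A = P1 q (-1)"
  define B where "B = P1 q 1"
  define C where "C = P1 (q^2) 1"
  have AQ: "P1 (q^2) (-1) = A * B" unfolding A_def B_def
    by (rule P1_mult[OF q(1), symmetric]) (simp add: algebra_simps power_mult[symmetric] power2_eq_square[symmetric] flip: power_add)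
  have q2: "norm (q^2) < 1" using q by (simp add: norm_power power_less_one_iff)
  have Bnz: "B \<noteq> 0" unfolding B_def by (rule P1_nonzero) (use q in auto)
  have Cnz: "C \<noteq> 0" unfolding C_def by (rule P1_nonzero) (use q2 in auto)
  have id: "A^2 * B^2 * (A^4 + B^4) = 2 * C^4" unfolding A_def B_def C_def by (rule identity_AB[OF q])
  have x: "x = 2 * (A / B)^2" unfolding x_def bb_def A_def B_def ..
  have y: "y = 2 * (A * B / C)^2" unfolding y_def bb_def AQ C_def ..
  have "x^2 * y^2 + 4 * y^2 - 16 * x = 16 * A^2 * (A^2 * B^2 * (A^4 + B^4) - 2 * C^4) / (B^2 * C^4)"
    unfolding x y using Bnz Cnz by (simp add: field_simps power2_eq_square power4_eq_xxxx)
  also have "\<dots> = 0" using id by simp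
  finally show ?thesis .
qed



lemma partB_alg:
  fixes x y z :: complex
  assumes h1: "x^2 * y^2 + 4 * y^2 - 16 * x = 0" and h2: "y^2 * z^2 + 4 * z^2 - 16 * y = 0"
  shows "(x + 2) ^ 4 * z ^ 4 = 2 ^ 8 * (x ^ 3 + 4 * x)"
proof -
  have a: "y^2 * (x^2 + 4) = 16 * x" using h1 by (simp add: algebra_simps)
  have b: "z^2 * (y^2 + 4) = 16 * y" using h2 by (simp add: algebra_simps)
  have c: "(y^2 + 4) * (x^2 + 4) = 4 * (x + 2)^2"
  proof -
    have "(y^2 + 4) * (x^2 + 4) = y^2 * (x^2 + 4) + 4 * (x^2 + 4)" by (simp add: algebra_simps)
    also have "\<dots> = 16 * x + 4 * (x^2 + 4)" using a by simp
    finally show ?thesis by (simp add: algebra_simps power2_eq_square)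
  qed
  have "(z^2 * (y^2 + 4))^2 * (x^2 + 4)^2 = (16 * y)^2 * (x^2 + 4)^2" using b by simp
  also have "(16 * y)^2 * (x^2 + 4)^2 = 256 * (y^2 * (x^2 + 4)) * (x^2 + 4)"
    by (simp add: power2_eq_square algebra_simps)
  also have "\<dots> = 256 * (16 * x) * (x^2 + 4)" using a by simp
  finally have d: "z^4 * ((y^2 + 4) * (x^2 + 4))^2 = 4096 * x * (x^2 + 4)"
    by (simp add: power2_eq_square power4_eq_xxxx algebra_simps)
  then have "z^4 * (4 * (x + 2)^2)^2 = 4096 * x * (x^2 + 4)" unfolding c .
  then have "16 * ((x + 2) ^ 4 * z ^ 4) = 16 * (2 ^ 8 * (x ^ 3 + 4 * x))"
    by (simp add: power2_eq_square power4_eq_xxxx power3_eq_cube algebra_simps)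
  then show ?thesis by (subst (asm) mult_left_cancel) simp_all
qed

definition ee :: "complex \<Rightarrow> complex" where
  "ee t = exp (of_real pi * \<i> * t / 2)"

lemma ee_norm: assumes "Im t > 0" shows "norm (ee t) < 1"
proof -
  have "Re (of_real pi * \<i> * t / 2) = - (pi * Im t / 2)" by simp
  moreover have "pi * Im t / 2 > 0" using assms by simp
  ultimately show ?thesis unfolding ee_def norm_exp_eq_Re by simp
qed

lemma ee_nz: "ee t \<noteq> 0" unfolding ee_def by simp

lemma ee2: "ee (2 * t) = (ee t)^2"
proof -
  have "of_real pi * \<i> * (2 * t) / 2 = of_real pi * \<i> * t / 2 + of_real pi * \<i> * t / 2" by simp
  then show ?thesis unfolding ee_def by (simp only: exp_add power2_eq_square)
qed

lemma ee4: "ee (4 * t) = (ee t)^4"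
proof -
  have "ee (4 * t) = ee (2 * (2 * t))" by simp
  also have "\<dots> = (ee t ^ 2)^2" by (simp only: ee2)
  finally show ?thesis by simp
qed

lemma bfun_bb: assumes "Im t > 0" shows "bfun t = bb (ee t)"
proof -
  define e where "e = ee t"
  have e1: "norm e < 1" using ee_norm[OF assms] by (simp add: e_def)
  have qp: "qpow t (real (Suc m) / 2 - 1 / 4) = e ^ (2*m+1)" for m
  proof -
    have "complex_of_real (real (Suc m) / 2 - 1 / 4) = of_nat (2*m+1) / 4" by simp
    then have "2 * complex_of_real pi * \<i> * complex_of_real (real (Suc m) / 2 - 1 / 4) * t
       = of_nat (2*m+1) * (of_real pi * \<i> * t / 2)" by (simp add: field_simps)
    then show ?thesis unfolding qpow_def e_def ee_def by (simp only: exp_of_nat_mult)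
  qed
  have cf: "convergent_prod (\<lambda>m. 1 + (-1) * e ^ (2*m+1))" "convergent_prod (\<lambda>m. 1 + 1 * e ^ (2*m+1))"
    using P1_conv[OF e1] by blast+
  have "bfun t = 2 * (\<Prod>m. ((1 + (-1) * e ^ (2*m+1)) / (1 + 1 * e ^ (2*m+1))) ^ 2)"
    unfolding bfun_def qp by simp
  also have "(\<Prod>m. ((1 + (-1) * e ^ (2*m+1)) / (1 + 1 * e ^ (2*m+1))) ^ 2)
      = (\<Prod>m. ((1 + (-1) * e ^ (2*m+1)) / (1 + 1 * e ^ (2*m+1)))) ^ 2"
    by (rule prodinf_power[OF convergent_prod_divide[OF cf]])
  also have "(\<Prod>m. ((1 + (-1) * e ^ (2*m+1)) / (1 + 1 * e ^ (2*m+1)))) = P1 e (-1) / P1 e 1"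
    unfolding P1_def by (rule prodinf_divide[OF cf, symmetric])
  finally show ?thesis unfolding bb_def e_def .
qed

theorem proposition7:
  fixes \<tau> :: complex
  assumes "Im \<tau> > 0"
  shows "(bfun \<tau>)\<^sup>2 * (bfun (2 * \<tau>))\<^sup>2 + 4 * (bfun (2 * \<tau>))\<^sup>2 - 16 * bfun \<tau> = 0 \<and>
         (bfun \<tau> + 2) ^ 4 * (bfun (4 * \<tau>)) ^ 4 = 2 ^ 8 * ((bfun \<tau>) ^ 3 + 4 * bfun \<tau>)"
proof -
  define e where "e = ee \<tau>"
  have e1: "norm e < 1" using ee_norm[OF assms] by (simp add: e_def)
  have e0: "e \<noteq> 0" using ee_nz by (simp add: e_def)
  have e21: "norm (e^2) < 1" using e1 by (simp add: norm_power power_less_one_iff)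
  have e20: "e^2 \<noteq> 0" using e0 by simp
  have b1: "bfun \<tau> = bb e" using bfun_bb[OF assms] by (simp add: e_def)
  have b2: "bfun (2 * \<tau>) = bb (e^2)" using bfun_bb[of "2*\<tau>"] assms by (simp add: e_def ee2)
  have b4: "bfun (4 * \<tau>) = bb ((e^2)^2)" using bfun_bb[of "4*\<tau>"] assms by (simp add: e_def ee4 flip: power_mult)
  have h1: "(bfun \<tau>)\<^sup>2 * (bfun (2 * \<tau>))\<^sup>2 + 4 * (bfun (2 * \<tau>))\<^sup>2 - 16 * bfun \<tau> = 0"
    unfolding b1 b2 by (rule partA[OF e1 e0])
  have h2: "(bfun (2*\<tau>))\<^sup>2 * (bfun (4 * \<tau>))\<^sup>2 + 4 * (bfun (4 * \<tau>))\<^sup>2 - 16 * bfun (2*\<tau>) = 0"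
    unfolding b2 b4 by (rule partA[OF e21 e20])
  show ?thesis using h1 partB_alg[OF h1 h2] by simp
qed


end
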